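(* Let ${\bf S}$ be any logic over $For$ (a consequence relation $\vdash_{\bf S}$) lying between ${\bf Km}$ and ${\bf T45m}$, i.e. $\Gamma\vdash_{\bf Km}\alpha$ implies $\Gamma\vdash_{\bf S}\alpha$, and $\Gamma\vdash_{\bf S}\alpha$ implies $\Gamma\vdash_{\bf T45m}\alpha$, for all $\Gamma\cup\{\alpha\}\subseteq For$. Then ${\bf S}$ is a conservative extension of classical propositional logic ${\bf PC}$: for every formula $\alpha$ built from propositional variables using only $\neg$ and $\to$, $\vdash_{\bf S}\alpha$ iff $\alpha$ is a classical tautology.
   Context: Formulas are built from a denumerable set of propositional variables by the unary connectives $\neg$, $\Box$ and the binary connective $\to$; $For$ is the set of all formulas. Abbreviations: $\Diamond\alpha:=\neg\Box\neg\alpha$, $\alpha\vee\beta:=\neg\alpha\to\beta$, $\alpha\wedge\beta:=\neg(\alpha\to\neg\beta)$. All Hilbert calculi below have as axioms all instances (over $For$) of the axiom schemas of a standard Hilbert calculus for classical propositional logic in the signature $\{\neg,\to\}$, plus the listed modal schemas, with modus ponens as the only rule; $\Gamma\vdash_{\bf L}\alpha$ means there is a derivation of $\alpha$ from $\Gamma$ in ${\bf L}$. ${\bf Km}$: (K') $\Diamond\alpha\to(\Box(\alpha\to\beta)\to(\Box\alpha\to\Box\beta))$; (K1') $\Diamond\neg\beta\to(\Box(\alpha\to\beta)\to(\Diamond\alpha\to\Diamond\beta))$; (K2') $\Diamond\alpha\to(\Diamond(\alpha\to\beta)\to(\Box\alpha\to\Diamond\beta))$; (M3') $(\Diamond\alpha\vee\Diamond\neg\alpha)\to(\Diamond\beta\to\Diamond(\alpha\to\beta))$;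 (M4') $\Diamond\neg\beta\to(\Diamond\neg\alpha\to\Diamond(\alpha\to\beta))$; (I1) $(\Box\alpha\wedge\Box\neg\alpha)\to(\Box(\alpha\to\beta)\wedge\Box\neg(\alpha\to\beta))$; (I2) $(\Box\beta\wedge\Box\neg\beta)\to(\Box(\alpha\to\beta)\wedge\Box\neg(\alpha\to\beta))$; (M1) $\neg\Diamond\alpha\to\Box(\alpha\to\beta)$; (M2) $\Box\beta\to\Box(\alpha\to\beta)$; (DN1) $\Box\alpha\to\Box\neg\neg\alpha$; (DN2) $\Box\neg\neg\alpha\to\Box\alpha$. ${\bf T45m}$: (K) $\Box(\alpha\to\beta)\to(\Box\alpha\to\Box\beta)$; (K1) $\Box(\alpha\to\beta)\to(\Diamond\alpha\to\Diamond\beta)$; (K2) $\Diamond(\alpha\to\beta)\to(\Box\alpha\to\Diamond\beta)$; (M1); (M2); (M3) $\Diamond\beta\to\Diamond(\alpha\to\beta)$; (M4) $\Diamond\neg\alpha\to\Diamond(\alpha\to\beta)$; (T) $\Box\alpha\to\alpha$; (DN1); (DN2); (4) $\Box\alpha\to\Box\Box\alpha$; (5) $\Diamond\Box\alpha\to\Box\alpha$. *)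

theory Defs
  imports Main
begin

datatype fm = Var nat | Neg fm | Imp fm fm | Box fm

definition Dia :: "fm \<Rightarrow> fm" where "Dia a = Neg (Box (Neg a))"
definition Or :: "fm \<Rightarrow> fm \<Rightarrow> fm" where "Or a b = Imp (Neg a) b"
definition And :: "fm \<Rightarrow> fm \<Rightarrow> fm" where "And a b = Neg (Imp a (Neg b))"

inductive pc_ax :: "fm \<Rightarrow> bool" where
  A1: "pc_ax (Imp a (Imp b a))"
| A2: "pc_ax (Imp (Imp a (Imp b c)) (Imp (Imp a b) (Imp a c)))"
| A3: "pc_ax (Imp (Imp (Neg a) (Neg b)) (Imp b a))"

inductive km_ax :: "fm \<Rightarrow> bool" where
  Kp:  "km_ax (Imp (Dia a) (Imp (Box (Imp a b)) (Imp (Box a) (Box b))))"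
| K1p: "km_ax (Imp (Dia (Neg b)) (Imp (Box (Imp a b)) (Imp (Dia a) (Dia b))))"
| K2p: "km_ax (Imp (Dia a) (Imp (Dia (Imp a b)) (Imp (Box a) (Dia b))))"
| M3p: "km_ax (Imp (Or (Dia a) (Dia (Neg a))) (Imp (Dia b) (Dia (Imp a b))))"
| M4p: "km_ax (Imp (Dia (Neg b)) (Imp (Dia (Neg a)) (Dia (Imp a b))))"
| I1:  "km_ax (Imp (And (Box a) (Box (Neg a))) (And (Box (Imp a b)) (Box (Neg (Imp a b)))))"
| I2:  "km_ax (Imp (And (Box b) (Box (Neg b))) (And (Box (Imp a b)) (Box (Neg (Imp a b)))))"
| M1:  "km_ax (Imp (Neg (Dia a)) (Box (Imp a b)))"
| M2:  "km_ax (Imp (Box b) (Box (Imp a b)))"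
| DN1: "km_ax (Imp (Box a) (Box (Neg (Neg a))))"
| DN2: "km_ax (Imp (Box (Neg (Neg a))) (Box a))"

inductive t45m_ax :: "fm \<Rightarrow> bool" where
  K:   "t45m_ax (Imp (Box (Imp a b)) (Imp (Box a) (Box b)))"
| K1:  "t45m_ax (Imp (Box (Imp a b)) (Imp (Dia a) (Dia b)))"
| K2:  "t45m_ax (Imp (Dia (Imp a b)) (Imp (Box a) (Dia b)))"
| M1:  "t45m_ax (Imp (Neg (Dia a)) (Box (Imp a b)))"
| M2:  "t45m_ax (Imp (Box b) (Box (Imp a b)))"
| M3:  "t45m_ax (Imp (Dia b) (Dia (Imp a b)))"
| M4:  "t45m_ax (Imp (Dia (Neg a)) (Dia (Imp a b)))"
| T:   "t45m_ax (Imp (Box a) a)"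
| DN1: "t45m_ax (Imp (Box a) (Box (Neg (Neg a))))"
| DN2: "t45m_ax (Imp (Box (Neg (Neg a))) (Box a))"
| Four: "t45m_ax (Imp (Box a) (Box (Box a)))"
| Five: "t45m_ax (Imp (Dia (Box a)) (Box a))"

inductive derives :: "(fm \<Rightarrow> bool) \<Rightarrow> fm set \<Rightarrow> fm \<Rightarrow> bool" for ax where
  prem: "a \<in> \<Gamma> \<Longrightarrow> derives ax \<Gamma> a"
| pc: "pc_ax a \<Longrightarrow> derives ax \<Gamma> a"
| modal: "ax a \<Longrightarrow> derives ax \<Gamma> a"
| mp: "derives ax \<Gamma> a \<Longrightarrow> derives ax \<Gamma> (Imp a b) \<Longrightarrow> derives ax \<Gamma> b"

abbreviation derives_Km :: "fm set \<Rightarrow> fm \<Rightarrow> bool" where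
  "derives_Km \<equiv> derives km_ax"
abbreviation derives_T45m :: "fm set \<Rightarrow> fm \<Rightarrow> bool" where
  "derives_T45m \<equiv> derives t45m_ax"

definition consequence_relation :: "(fm set \<Rightarrow> fm \<Rightarrow> bool) \<Rightarrow> bool" where
  "consequence_relation S \<longleftrightarrow>
     (\<forall>\<Gamma> a. a \<in> \<Gamma> \<longrightarrow> S \<Gamma> a) \<and>
     (\<forall>\<Gamma> \<Delta> a. S \<Gamma> a \<and> \<Gamma> \<subseteq> \<Delta> \<longrightarrow> S \<Delta> a) \<and>
     (\<forall>\<Gamma> \<Delta> a. (\<forall>b\<in>\<Delta>. S \<Gamma> b) \<and> S (\<Gamma> \<union> \<Delta>) a \<longrightarrow> S \<Gamma> a)"

fun box_free :: "fm \<Rightarrow> bool" where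
  "box_free (Var n) = True"
| "box_free (Neg a) = box_free a"
| "box_free (Imp a b) = (box_free a \<and> box_free b)"
| "box_free (Box a) = False"

text \<open>Classical two-valued evaluation (Box case irrelevant for box-free formulas).\<close>
fun eval :: "(nat \<Rightarrow> bool) \<Rightarrow> fm \<Rightarrow> bool" where
  "eval v (Var n) = v n"
| "eval v (Neg a) = (\<not> eval v a)"
| "eval v (Imp a b) = (eval v a \<longrightarrow> eval v b)"
| "eval v (Box a) = False"

definition tautology :: "fm \<Rightarrow> bool" where
  "tautology a \<longleftrightarrow> (\<forall>v. eval v a)"

end

theory Submission
  imports Defs
begin

fun ev :: "(nat \<Rightarrow> bool) \<Rightarrow> fm \<Rightarrow> bool" where
  "ev v (Var n) = v n"
| "ev v (Neg a) = (\<not> ev v a)"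
| "ev v (Imp a b) = (ev v a \<longrightarrow> ev v b)"
| "ev v (Box a) = ev v a"

lemma ev_sound: "derives t45m_ax \<Gamma> a \<Longrightarrow> \<Gamma> = {} \<Longrightarrow> ev v a"
proof (induction rule: derives.induct)
  case (pc a \<Gamma>) then show ?case by (cases rule: pc_ax.cases) auto
next
  case (modal a \<Gamma>) then show ?case by (cases rule: t45m_ax.cases) (auto simp: Dia_def)
qed auto

lemma ev_eval: "box_free a \<Longrightarrow> ev v a = eval v a"
  by (induction a) auto

lemma weak: "derives ax \<Gamma> a \<Longrightarrow> \<Gamma> \<subseteq> \<Delta> \<Longrightarrow> derives ax \<Delta> a"
  by (induction rule: derives.induct) (auto intro: derives.intros)

lemma ident: "derives ax \<Gamma> (Imp a a)"
proof -
  have 1: "derives ax \<Gamma> (Imp (Imp a (Imp (Imp a a) a)) (Imp (Imp a (Imp a a)) (Imp a a)))"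
    by (rule derives.pc) (rule pc_ax.A2)
  have 2: "derives ax \<Gamma> (Imp a (Imp (Imp a a) a))" by (rule derives.pc) (rule pc_ax.A1)
  have 3: "derives ax \<Gamma> (Imp a (Imp a a))" by (rule derives.pc) (rule pc_ax.A1)
  show ?thesis by (rule derives.mp[OF 3 derives.mp[OF 2 1]])
qed

lemma ax1: "derives ax \<Gamma> (Imp a (Imp b a))" by (rule derives.pc) (rule pc_ax.A1)
lemma ax2: "derives ax \<Gamma> (Imp (Imp a (Imp b c)) (Imp (Imp a b) (Imp a c)))"
  by (rule derives.pc) (rule pc_ax.A2)
lemma ax3: "derives ax \<Gamma> (Imp (Imp (Neg a) (Neg b)) (Imp b a))"
  by (rule derives.pc) (rule pc_ax.A3)

lemma MP: "derives ax \<Gamma> (Imp a b) \<Longrightarrow> derives ax \<Gamma> a \<Longrightarrow> derives ax \<Gamma> b"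
  using derives.mp by blast

lemma ded_aux: "derives ax \<Delta> b \<Longrightarrow> \<Delta> = insert a \<Gamma> \<Longrightarrow> derives ax \<Gamma> (Imp a b)"
proof (induction rule: derives.induct)
  case (prem b \<Delta>)
  show ?case
  proof (cases "b = a")
    case True then show ?thesis using ident by blast
  next
    case False then have "b \<in> \<Gamma>" using prem by auto
    then show ?thesis using MP[OF ax1 derives.prem] by blast
  qed
next
  case (pc b \<Delta>) then show ?case using MP[OF ax1 derives.pc] by blast
next
  case (modal b \<Delta>) then show ?case using MP[OF ax1 derives.modal] by blast
next
  case (mp \<Delta> b c)
  then show ?case using MP[OF MP[OF ax2]] by blast
qed

lemma ded: "derives ax (insert a \<Gamma>) b \<Longrightarrow> derives ax \<Gamma> (Imp a b)"
  using ded_aux by blast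

lemma P: "a \<in> \<Gamma> \<Longrightarrow> derives ax \<Gamma> a" by (rule derives.prem)

lemma lc: "derives ax \<Gamma> (Imp (Neg b) (Imp b c))"
proof -
  have "derives ax (insert b (insert (Neg b) \<Gamma>)) c"
    by (rule MP[OF MP[OF ax3 MP[OF ax1 P]] P]) auto
  then show ?thesis by (intro ded) (simp add: insert_commute)
qed

lemma la: "derives ax \<Gamma> (Imp (Neg (Neg b)) b)"
proof -
  let ?G = "insert (Neg (Neg b)) \<Gamma>"
  have "derives ax ?G (Imp (Neg (Neg (Neg (Neg b)))) (Neg (Neg b)))"
    using MP[OF ax1 P] by blast
  then have "derives ax ?G (Imp (Neg b) (Neg (Neg (Neg b))))" using MP[OF ax3] by blast
  then have "derives ax ?G (Imp (Neg (Neg b)) b)" using MP[OF ax3] by blast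
  then have "derives ax ?G b" using MP P by blast
  then show ?thesis by (rule ded)
qed

lemma lb: "derives ax \<Gamma> (Imp b (Neg (Neg b)))"
  using MP[OF ax3 la] by blast

lemma chain: "derives ax \<Gamma> (Imp a b) \<Longrightarrow> derives ax \<Gamma> (Imp b c) \<Longrightarrow> derives ax \<Gamma> (Imp a c)"
proof -
  assume 1: "derives ax \<Gamma> (Imp a b)" and 2: "derives ax \<Gamma> (Imp b c)"
  have "derives ax (insert a \<Gamma>) c"
    using MP[OF weak[OF 2] MP[OF weak[OF 1] P]] by auto
  then show ?thesis by (rule ded)
qed

lemma le: "derives ax \<Gamma> (Imp (Imp b c) (Imp (Neg c) (Neg b)))"
proof -
  let ?G = "insert (Imp b c) \<Gamma>"
  have "derives ax ?G (Imp (Neg (Neg b)) (Neg (Neg c)))"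
    by (rule chain[OF la chain[OF P lb]]) simp
  then have "derives ax ?G (Imp (Neg c) (Neg b))" using MP[OF ax3] by blast
  then show ?thesis by (rule ded)
qed

lemma lf: "derives ax \<Gamma> (Imp b (Imp (Neg c) (Neg (Imp b c))))"
proof -
  let ?G = "insert b \<Gamma>"
  have "derives ax (insert (Imp b c) ?G) c" by (rule MP[OF P P]) auto
  then have "derives ax ?G (Imp (Imp b c) c)" by (rule ded)
  then have "derives ax ?G (Imp (Neg c) (Neg (Imp b c)))" using MP[OF le] by blast
  then show ?thesis by (rule ded)
qed

lemma lg: "derives ax \<Gamma> (Imp (Imp b c) (Imp (Imp (Neg b) c) c))"
proof -
  let ?G = "insert (Imp (Neg b) c) (insert (Imp b c) \<Gamma>)"
  let ?H = "insert (Neg c) ?G"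
  have nb: "derives ax ?H (Neg b)" by (rule MP[OF MP[OF le P] P]) auto
  have nnb: "derives ax ?H (Neg (Neg b))" by (rule MP[OF MP[OF le P] P]) auto
  have "derives ax ?H (Neg (Imp c c))" using MP[OF MP[OF lc nnb] nb] .
  then have "derives ax ?G (Imp (Neg c) (Neg (Imp c c)))" by (rule ded)
  then have "derives ax ?G c" using MP[OF MP[OF ax3] ident] by blast
  then show ?thesis by (intro ded)
qed

fun vars :: "fm \<Rightarrow> nat set" where
  "vars (Var n) = {n}"
| "vars (Neg a) = vars a"
| "vars (Imp a b) = vars a \<union> vars b"
| "vars (Box a) = vars a"

lemma finite_vars: "finite (vars a)" by (induction a) auto

definition lit :: "(nat \<Rightarrow> bool) \<Rightarrow> nat \<Rightarrow> fm" where
  "lit v n = (if v n then Var n else Neg (Var n))"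

definition Pv :: "(nat \<Rightarrow> bool) \<Rightarrow> nat set \<Rightarrow> fm set" where
  "Pv v X = lit v ` X"

lemma kalmar: "box_free a \<Longrightarrow> vars a \<subseteq> X \<Longrightarrow>
  derives ax (Pv v X) (if eval v a then a else Neg a)"
proof (induction a)
  case (Var n)
  then show ?case by (intro P) (auto simp: Pv_def lit_def)
next
  case (Neg b)
  then show ?case using MP[OF lb] by (auto split: if_splits)
next
  case (Imp b c)
  then have hb: "derives ax (Pv v X) (if eval v b then b else Neg b)"
    and hc: "derives ax (Pv v X) (if eval v c then c else Neg c)" by auto
  show ?case
  proof (cases "eval v b")
    case False then show ?thesis using MP[OF lc] hb by auto
  next
    case tb: True
    show ?thesis
    proof (cases "eval v c")
      case True then show ?thesis using MP[OF ax1] hc by auto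
    next
      case False then show ?thesis using MP[OF MP[OF lf]] hb hc tb by auto
    qed
  qed
next
  case (Box a) then show ?case by simp
qed

lemma elim: "finite X \<Longrightarrow> (\<forall>v. derives ax (Pv v X) a) \<Longrightarrow> derives ax {} a"
proof (induction X rule: finite_induct)
  case empty then show ?case by (simp add: Pv_def)
next
  case (insert n X)
  have "derives ax (Pv v X) a" for v
  proof -
    let ?v1 = "v(n := True)" and ?v2 = "v(n := False)"
    have e1: "Pv ?v1 X = Pv v X" "Pv ?v2 X = Pv v X"
      using insert(2) by (auto simp: Pv_def lit_def)
    have "derives ax (Pv ?v1 (insert n X)) a" "derives ax (Pv ?v2 (insert n X)) a"
      using insert(4) by auto
    then have "derives ax (insert (Var n) (Pv v X)) a" "derives ax (insert (Neg (Var n)) (Pv v X)) a"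
      using e1 by (auto simp: Pv_def lit_def)
    then have "derives ax (Pv v X) (Imp (Var n) a)" "derives ax (Pv v X) (Imp (Neg (Var n)) a)"
      by (auto intro: ded)
    then show ?thesis using MP[OF MP[OF lg]] by blast
  qed
  then show ?case using insert(3) by blast
qed

lemma complete: "box_free a \<Longrightarrow> tautology a \<Longrightarrow> derives ax {} a"
proof -
  assume b: "box_free a" and t: "tautology a"
  have "\<forall>v. derives ax (Pv v (vars a)) a"
    using kalmar[OF b order_refl] t by (auto simp: tautology_def)
  then show ?thesis using elim finite_vars by blast
qed

theorem mainTheorem17:
  fixes S :: "fm set \<Rightarrow> fm \<Rightarrow> bool"
  assumes "consequence_relation S"
    and "\<And>\<Gamma> a. derives_Km \<Gamma> a \<Longrightarrow> S \<Gamma> a"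
    and "\<And>\<Gamma> a. S \<Gamma> a \<Longrightarrow> derives_T45m \<Gamma> a"
  shows "\<forall>a. box_free a \<longrightarrow> (S {} a \<longleftrightarrow> tautology a)"
proof (intro allI impI iffI)
  fix a assume b: "box_free a"
  { assume "S {} a"
    then have "derives_T45m {} a" using assms(3) by blast
    then show "tautology a" using ev_sound ev_eval[OF b] by (auto simp: tautology_def) }
  { assume "tautology a"
    then show "S {} a" using complete[OF b] assms(2) by blast }
qed

end
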